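(* Let $n\ge1$, $\varepsilon>0$, $A>0$, and define $$\Theta(\eta)=e^{-\varepsilon\left[A+(|x|^2+|y|^2)^2+\tau^2\right]^{1/2}},\qquad \eta=(x,y,\tau)\in\mathbb{H}^n.$$ Then $-\Delta_{\mathbb{H}}\Theta(\eta)\le 2\varepsilon(Q+2)\Theta(\eta)$ for all $\eta\in\mathbb{H}^n$.
   Context: $\mathbb{H}^n$ is $\mathbb{R}^{2n+1}$ with points $\eta=(x,y,\tau)$, $x,y\in\mathbb{R}^n$, $\tau\in\mathbb{R}$. The vector fields are $X_i=\partial_{x_i}-2y_i\partial_\tau$, $Y_i=\partial_{y_i}+2x_i\partial_\tau$ ($i=1,\dots,n$), the sub-Laplacian is $\Delta_{\mathbb{H}}=\sum_{i=1}^n(X_i^2+Y_i^2)$, and $Q=2n+2$. *)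

theory Defs
  imports "HOL-Analysis.Analysis"
begin

text \<open>Points of the Heisenberg group H^n are triples (x, y, tau) with x, y in R^n
  (the type real^'n, n = CARD('n) >= 1) and tau real. Functions on H^n are curried.\<close>

type_synonym 'n hfun = "real^'n \<Rightarrow> real^'n \<Rightarrow> real \<Rightarrow> real"

definition dx :: "'n::finite \<Rightarrow> 'n hfun \<Rightarrow> 'n hfun" where
  "dx i f = (\<lambda>x y t. deriv (\<lambda>s. f (x + s *\<^sub>R axis i 1) y t) 0)"

definition dy :: "'n::finite \<Rightarrow> 'n hfun \<Rightarrow> 'n hfun" where
  "dy i f = (\<lambda>x y t. deriv (\<lambda>s. f x (y + s *\<^sub>R axis i 1) t) 0)"

definition dtau :: "'n::finite hfun \<Rightarrow> 'n hfun" where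
  "dtau f = (\<lambda>x y t. deriv (\<lambda>s. f x y (t + s)) 0)"

definition Xfield :: "'n::finite \<Rightarrow> 'n hfun \<Rightarrow> 'n hfun" where
  "Xfield i f = (\<lambda>x y t. dx i f x y t - 2 * (y $ i) * dtau f x y t)"

definition Yfield :: "'n::finite \<Rightarrow> 'n hfun \<Rightarrow> 'n hfun" where
  "Yfield i f = (\<lambda>x y t. dy i f x y t + 2 * (x $ i) * dtau f x y t)"

definition subLaplacian :: "'n::finite hfun \<Rightarrow> 'n hfun" where
  "subLaplacian f = (\<lambda>x y t. \<Sum>i\<in>UNIV. Xfield i (Xfield i f) x y t + Yfield i (Yfield i f) x y t)"

definition homdim :: "'n::finite itself \<Rightarrow> real" where
  "homdim _ = 2 * real CARD('n) + 2"

end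

theory Submission imports Defs begin

lemma norm_line: fixes x :: "real^'n::finite" shows "norm (x + s *\<^sub>R axis i 1)^2 = norm x ^2 + 2 * s * x$i + s^2"
  unfolding power2_norm_eq_inner by (simp add: inner_add_left inner_add_right inner_axis inner_axis' algebra_simps power2_eq_square)

lemma comp_line: fixes x :: "real^'n::finite" shows "(x + s *\<^sub>R axis i 1)$i = x$i + s"
  by (simp add: axis_def)

lemma sumsq: fixes x :: "real^'n::finite" shows "(\<Sum>i\<in>UNIV. (x$i)^2) = norm x ^2"
  unfolding power2_norm_eq_inner by (simp add: inner_vec_def power2_eq_square)

definition SS :: "real \<Rightarrow> real \<Rightarrow> real \<Rightarrow> real \<Rightarrow> real" where
  "SS A p q t = sqrt (A + (p+q)^2 + t^2)"
definition Th :: "real \<Rightarrow> real \<Rightarrow> real \<Rightarrow> real \<Rightarrow> real \<Rightarrow> real" where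
  "Th e A p q t = exp (- e * SS A p q t)"
definition K :: "real \<Rightarrow> real \<Rightarrow> real \<Rightarrow> real \<Rightarrow> real \<Rightarrow> real \<Rightarrow> real \<Rightarrow> real" where
  "K e A p q a b t = -2*e*Th e A p q t * ((p+q)*a - t*b) / SS A p q t"

lemma SS_pos: "A > 0 \<Longrightarrow> SS A p q t > 0"
  unfolding SS_def by (simp add: add_pos_nonneg)

lemma SS_deriv:
  assumes A: "A > 0" and P: "(P has_real_derivative P') (at z)" and Q: "(Q has_real_derivative Q') (at z)"
    and T: "(T has_real_derivative T') (at z)"
  shows "((\<lambda>s. SS A (P s) (Q s) (T s)) has_real_derivative
     (((P z + Q z)*(P'+Q') + T z * T') / SS A (P z) (Q z) (T z))) (at z)"
proof -
  have pos: "0 < A + (P z + Q z)^2 + (T z)^2" using A by (simp add: add_pos_nonneg)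
  show ?thesis unfolding SS_def
    using pos by (auto intro!: derivative_eq_intros P Q T simp: field_simps power2_eq_square)
qed

lemma Th_deriv:
  assumes A: "A > 0" and P: "(P has_real_derivative P') (at z)" and Q: "(Q has_real_derivative Q') (at z)"
    and T: "(T has_real_derivative T') (at z)"
  shows "((\<lambda>s. Th e A (P s) (Q s) (T s)) has_real_derivative
     (- e * Th e A (P z) (Q z) (T z) * ((P z + Q z)*(P'+Q') + T z * T') / SS A (P z) (Q z) (T z))) (at z)"
  unfolding Th_def
  by (auto intro!: derivative_eq_intros SS_deriv[OF A P Q T])

lemma K_deriv:
  assumes A: "A > 0" and P: "(P has_real_derivative P') (at z)" and Q: "(Q has_real_derivative Q') (at z)"
    and T: "(T has_real_derivative T') (at z)" and a: "(a has_real_derivative a') (at z)"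
    and b: "(b has_real_derivative b') (at z)"
  shows "((\<lambda>s. K e A (P s) (Q s) (a s) (b s) (T s)) has_real_derivative
     (let r = P z + Q z; S = SS A (P z) (Q z) (T z); F = Th e A (P z) (Q z) (T z);
          aa = r * a z - T z * b z; dr = P'+Q'; daa = dr * a z + r * a' - T' * b z - T z * b';
          dS = (r*dr + T z * T')/S in
      -2*e*( (- e * F * dS) * aa / S + F * daa / S - F * aa * dS / S^2))) (at z)"
proof -
  have Sp: "SS A (P z) (Q z) (T z) > 0" using SS_pos[OF A] .
  show ?thesis unfolding K_def Let_def
    using Sp by (auto intro!: derivative_eq_intros SS_deriv[OF A P Q T] Th_deriv[OF A P Q T] P Q T a b simp: field_simps power2_eq_square)
qed

lemma dx_from: "((\<lambda>s. F (x + s *\<^sub>R axis i 1) y t) has_real_derivative D) (at 0) \<Longrightarrow> dx i F x y t = D"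
  unfolding dx_def by (rule DERIV_imp_deriv)
lemma dy_from: "((\<lambda>s. F x (y + s *\<^sub>R axis i 1) t) has_real_derivative D) (at 0) \<Longrightarrow> dy i F x y t = D"
  unfolding dy_def by (rule DERIV_imp_deriv)
lemma dtau_from: "((\<lambda>s. F x y (t + s)) has_real_derivative D) (at 0) \<Longrightarrow> dtau F x y t = D"
  unfolding dtau_def by (rule DERIV_imp_deriv)

lemma dP: fixes x :: "real^'n::finite"
  shows "((\<lambda>s. norm (x + s *\<^sub>R axis i 1)^2) has_real_derivative 2 * x$i) (at 0)"
  unfolding norm_line by (auto intro!: derivative_eq_intros)
lemma dC: fixes x :: "real^'n::finite"
  shows "((\<lambda>s. (x + s *\<^sub>R axis i 1)$i) has_real_derivative 1) (at 0)"
  unfolding comp_line by (auto intro!: derivative_eq_intros)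
lemma dCm: fixes x :: "real^'n::finite"
  shows "((\<lambda>s. - ((x + s *\<^sub>R axis i 1)$i)) has_real_derivative -1) (at 0)"
  unfolding comp_line by (auto intro!: derivative_eq_intros)
lemma dT: "((\<lambda>s. t + s) has_real_derivative 1) (at 0)"
  by (auto intro!: derivative_eq_intros)

lemma XTh: fixes i :: "'n::finite"
  assumes A: "A > 0"
  shows "Xfield i (\<lambda>x y t. Th e A (norm x^2) (norm y^2) t) = (\<lambda>x y t. K e A (norm x^2) (norm y^2) (x$i) (y$i) t)"
proof (intro ext)
  fix x y :: "real^'n" and t :: real
  have Sp: "SS A (norm x^2) (norm y^2) t > 0" using SS_pos[OF A] .
  have 1: "dx i (\<lambda>x y t. Th e A (norm x^2) (norm y^2) t) x y t =
     - e * Th e A (norm x^2) (norm y^2) t * ((norm x^2 + norm y^2)*(2 * x$i + 0) + t * 0) / SS A (norm x^2) (norm y^2) t"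
    apply (rule dx_from) using Th_deriv[OF A dP[of x i] DERIV_const[of "norm y^2"] DERIV_const[of t]] by simp
  have 2: "dtau (\<lambda>x y t. Th e A (norm x^2) (norm y^2) t) x y t =
     - e * Th e A (norm x^2) (norm y^2) t * ((norm x^2 + norm y^2)*(0 + 0) + t * 1) / SS A (norm x^2) (norm y^2) t"
    apply (rule dtau_from) using Th_deriv[OF A DERIV_const[of "norm x^2"] DERIV_const[of "norm y^2"] dT[of t]] by simp
  show "Xfield i (\<lambda>x y t. Th e A (norm x^2) (norm y^2) t) x y t = K e A (norm x^2) (norm y^2) (x$i) (y$i) t"
    unfolding Xfield_def 1 2 K_def using Sp by (simp add: field_simps)
qed

lemma YTh: fixes i :: "'n::finite"
  assumes A: "A > 0"
  shows "Yfield i (\<lambda>x y t. Th e A (norm x^2) (norm y^2) t) = (\<lambda>x y t. K e A (norm x^2) (norm y^2) (y$i) (- (x$i)) t)"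
proof (intro ext)
  fix x y :: "real^'n" and t :: real
  have Sp: "SS A (norm x^2) (norm y^2) t > 0" using SS_pos[OF A] .
  have 1: "dy i (\<lambda>x y t. Th e A (norm x^2) (norm y^2) t) x y t =
     - e * Th e A (norm x^2) (norm y^2) t * ((norm x^2 + norm y^2)*(0 + 2 * y$i) + t * 0) / SS A (norm x^2) (norm y^2) t"
    apply (rule dy_from) using Th_deriv[OF A DERIV_const[of "norm x^2"] dP[of y i] DERIV_const[of t]] by simp
  have 2: "dtau (\<lambda>x y t. Th e A (norm x^2) (norm y^2) t) x y t =
     - e * Th e A (norm x^2) (norm y^2) t * ((norm x^2 + norm y^2)*(0 + 0) + t * 1) / SS A (norm x^2) (norm y^2) t"
    apply (rule dtau_from) using Th_deriv[OF A DERIV_const[of "norm x^2"] DERIV_const[of "norm y^2"] dT[of t]] by simp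
  show "Yfield i (\<lambda>x y t. Th e A (norm x^2) (norm y^2) t) x y t = K e A (norm x^2) (norm y^2) (y$i) (- (x$i)) t"
    unfolding Yfield_def 1 2 K_def using Sp by (simp add: field_simps)
qed

lemma XX: fixes i :: "'n::finite" and x y :: "real^'n" and t e A :: real
  assumes A: "A > 0"
  defines "r \<equiv> norm x^2 + norm y^2" and "S \<equiv> SS A (norm x^2) (norm y^2) t" and "F \<equiv> Th e A (norm x^2) (norm y^2) t"
  shows "Xfield i (\<lambda>x y t. K e A (norm x^2) (norm y^2) (x$i) (y$i) t) x y t =
    -2*e*F*((r + 2*(x$i)^2 + 2*(y$i)^2)/S - (2*e/S^2 + 2/S^3)*(r*(x$i) - t*(y$i))^2)"
proof -
  have Sp: "S > 0" unfolding S_def using SS_pos[OF A] .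
  have 1: "dx i (\<lambda>x y t. K e A (norm x^2) (norm y^2) (x$i) (y$i) t) x y t =
     (let r = norm x^2 + norm y^2; S = SS A (norm x^2) (norm y^2) t; F = Th e A (norm x^2) (norm y^2) t;
          aa = r * x$i - t * y$i; dr = 2 * x$i + 0; daa = dr * x$i + r * 1 - 0 * y$i - t * 0;
          dS = (r*dr + t * 0)/S in
      -2*e*( (- e * F * dS) * aa / S + F * daa / S - F * aa * dS / S^2))"
    apply (rule dx_from) using K_deriv[OF A dP[of x i] DERIV_const[of "norm y^2"] DERIV_const[of t] dC[of x i] DERIV_const[of "y$i"]] by simp
  have 2: "dtau (\<lambda>x y t. K e A (norm x^2) (norm y^2) (x$i) (y$i) t) x y t =
     (let r = norm x^2 + norm y^2; S = SS A (norm x^2) (norm y^2) t; F = Th e A (norm x^2) (norm y^2) t;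
          aa = r * x$i - t * y$i; dr = 0 + 0; daa = dr * x$i + r * 0 - 1 * y$i - t * 0;
          dS = (r*dr + t * 1)/S in
      -2*e*( (- e * F * dS) * aa / S + F * daa / S - F * aa * dS / S^2))"
    apply (rule dtau_from) using K_deriv[OF A DERIV_const[of "norm x^2"] DERIV_const[of "norm y^2"] dT[of t] DERIV_const[of "x$i"] DERIV_const[of "y$i"]] by simp
  show ?thesis
    unfolding Xfield_def 1 2 Let_def r_def[symmetric] S_def[symmetric] F_def[symmetric] using Sp
    by (simp add: field_simps power2_eq_square power3_eq_cube)
qed

lemma YY: fixes i :: "'n::finite" and x y :: "real^'n" and t e A :: real
  assumes A: "A > 0"
  defines "r \<equiv> norm x^2 + norm y^2" and "S \<equiv> SS A (norm x^2) (norm y^2) t" and "F \<equiv> Th e A (norm x^2) (norm y^2) t"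
  shows "Yfield i (\<lambda>x y t. K e A (norm x^2) (norm y^2) (y$i) (- (x$i)) t) x y t =
    -2*e*F*((r + 2*(x$i)^2 + 2*(y$i)^2)/S - (2*e/S^2 + 2/S^3)*(r*(y$i) + t*(x$i))^2)"
proof -
  have Sp: "S > 0" unfolding S_def using SS_pos[OF A] .
  have 1: "dy i (\<lambda>x y t. K e A (norm x^2) (norm y^2) (y$i) (- (x$i)) t) x y t =
     (let r = norm x^2 + norm y^2; S = SS A (norm x^2) (norm y^2) t; F = Th e A (norm x^2) (norm y^2) t;
          aa = r * y$i - t * (- x$i); dr = 0 + 2 * y$i; daa = dr * y$i + r * 1 - 0 * (- x$i) - t * 0;
          dS = (r*dr + t * 0)/S in
      -2*e*( (- e * F * dS) * aa / S + F * daa / S - F * aa * dS / S^2))"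
    apply (rule dy_from) using K_deriv[OF A DERIV_const[of "norm x^2"] dP[of y i] DERIV_const[of t] dC[of y i] DERIV_const[of "- (x$i)"]] by simp
  have 2: "dtau (\<lambda>x y t. K e A (norm x^2) (norm y^2) (y$i) (- (x$i)) t) x y t =
     (let r = norm x^2 + norm y^2; S = SS A (norm x^2) (norm y^2) t; F = Th e A (norm x^2) (norm y^2) t;
          aa = r * y$i - t * (- x$i); dr = 0 + 0; daa = dr * y$i + r * 0 - 1 * (- x$i) - t * 0;
          dS = (r*dr + t * 1)/S in
      -2*e*( (- e * F * dS) * aa / S + F * daa / S - F * aa * dS / S^2))"
    apply (rule dtau_from) using K_deriv[OF A DERIV_const[of "norm x^2"] DERIV_const[of "norm y^2"] dT[of t] DERIV_const[of "y$i"] DERIV_const[of "- (x$i)"]] by simp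
  show ?thesis
    unfolding Yfield_def 1 2 Let_def r_def[symmetric] S_def[symmetric] F_def[symmetric] using Sp
    by (simp add: field_simps power2_eq_square power3_eq_cube)
qed

lemma aux: "(a::real) = b - c \<Longrightarrow> 0 \<le> c \<Longrightarrow> a \<le> b" by linarith

theorem mainTheorem2:
  fixes eps A :: real and x y :: "real^'n::finite" and tau :: real
  assumes "eps > 0" and "A > 0"
  defines "Theta \<equiv> (\<lambda>(x::real^'n) (y::real^'n) (t::real).
              exp (- eps * sqrt (A + (norm x ^ 2 + norm y ^ 2) ^ 2 + t ^ 2)))"
  shows "- subLaplacian Theta x y tau \<le> 2 * eps * (homdim TYPE('n) + 2) * Theta x y tau"
proof -
  note A = \<open>A > 0\<close> and ep = \<open>eps > 0\<close>
  have TE: "Theta = (\<lambda>x y t. Th eps A (norm x^2) (norm y^2) t)"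
    unfolding Theta_def Th_def SS_def by simp
  define r where "r = norm x^2 + norm y^2"
  define S where "S = SS A (norm x^2) (norm y^2) tau"
  define F where "F = Th eps A (norm x^2) (norm y^2) tau"
  have Sp: "S > 0" unfolding S_def using SS_pos[OF A] .
  have Fp: "F > 0" unfolding F_def Th_def by simp
  have r0: "r \<ge> 0" unfolding r_def by simp
  have rS: "r \<le> S"
  proof -
    have "r = sqrt (r^2)" using r0 by simp
    also have "\<dots> \<le> S" unfolding S_def SS_def r_def[symmetric] using A
      by (intro real_sqrt_le_mono) (simp add: add_nonneg_nonneg)
    finally show ?thesis .
  qed
  have ThF: "Theta x y tau = F" unfolding TE F_def by simp
  have L: "subLaplacian Theta x y tau = (\<Sum>i\<in>UNIV.
      -2*eps*F*((r + 2*(x$i)^2 + 2*(y$i)^2)/S - (2*eps/S^2 + 2/S^3)*(r*(x$i) - tau*(y$i))^2)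
    + -2*eps*F*((r + 2*(x$i)^2 + 2*(y$i)^2)/S - (2*eps/S^2 + 2/S^3)*(r*(y$i) + tau*(x$i))^2))"
    unfolding subLaplacian_def TE XTh[OF A] YTh[OF A] XX[OF A] YY[OF A] r_def S_def F_def by simp
  have per: "-(-2*eps*F*((r + 2*(x$i)^2 + 2*(y$i)^2)/S - (2*eps/S^2 + 2/S^3)*(r*(x$i) - tau*(y$i))^2)
    + -2*eps*F*((r + 2*(x$i)^2 + 2*(y$i)^2)/S - (2*eps/S^2 + 2/S^3)*(r*(y$i) + tau*(x$i))^2))
    \<le> 2*eps*F*(2*r + 4*(x$i)^2 + 4*(y$i)^2)/S" for i
  proof -
    have c: "0 \<le> 2*eps*F*((2*eps/S^2 + 2/S^3)*(r*(x$i) - tau*(y$i))^2 + (2*eps/S^2 + 2/S^3)*(r*(y$i) + tau*(x$i))^2)"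
      using ep Fp Sp by (intro mult_nonneg_nonneg add_nonneg_nonneg) auto
    have "-(-2*eps*F*((r + 2*(x$i)^2 + 2*(y$i)^2)/S - (2*eps/S^2 + 2/S^3)*(r*(x$i) - tau*(y$i))^2)
      + -2*eps*F*((r + 2*(x$i)^2 + 2*(y$i)^2)/S - (2*eps/S^2 + 2/S^3)*(r*(y$i) + tau*(x$i))^2))
      = 2*eps*F*(2*r + 4*(x$i)^2 + 4*(y$i)^2)/S
        - 2*eps*F*((2*eps/S^2 + 2/S^3)*(r*(x$i) - tau*(y$i))^2 + (2*eps/S^2 + 2/S^3)*(r*(y$i) + tau*(x$i))^2)"
      by (simp add: algebra_simps add_divide_distrib)
    from aux[OF this c] show ?thesis .
  qed
  have "- subLaplacian Theta x y tau \<le> (\<Sum>i\<in>UNIV. 2*eps*F*(2*r + 4*(x$i)^2 + 4*(y$i)^2)/S)"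
    unfolding L sum_negf[symmetric] by (rule sum_mono) (rule per)
  also have "\<dots> = 2*eps*F/S * (\<Sum>i\<in>UNIV. 2*r + 4*(x$i)^2 + 4*(y$i)^2)"
    by (simp add: sum_distrib_left)
  also have "(\<Sum>i\<in>UNIV. 2*r + 4*(x$i)^2 + 4*(y$i)^2) = 2*r*real CARD('n) + 4*r"
    by (simp add: sum.distrib sum_distrib_left[symmetric] sumsq r_def algebra_simps)
  also have "2*eps*F/S * (2*r*real CARD('n) + 4*r) = 2*eps*F*(2*real CARD('n) + 4) * (r/S)"
    by (simp add: algebra_simps)
  also have "\<dots> \<le> 2*eps*F*(2*real CARD('n) + 4) * 1"
    using rS Sp ep Fp by (intro mult_left_mono) (auto simp: divide_le_eq_1)
  finally show ?thesis unfolding ThF homdim_def by (simp add: algebra_simps)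
qed
end
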